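(* Let $A \in \mathbb{C}^{m \times p}$, $y \in \mathbb{C}^{m}$, patch-extraction operators $P_1,\dots,P_N \in \{0,1\}^{n \times p}$, and $\nu,\eta,C>0$. Let $$g(W,B,x) = \nu\|Ax-y\|_2^2 + \varphi(W) + \chi(x) + \sum_{j=1}^N \left\{ \|W P_j x - b_j\|_2^2 + \eta^2 \|b_j\|_0\right\},$$ with $\varphi(W)=0$ if $W^HW=I$ and $+\infty$ otherwise, $\chi(x)=0$ if $\|x\|_2\le C$ and $+\infty$ otherwise. For each initialization $(W^0,B^0,x^0)$, the iterate sequence of Algorithm A1 (described in the context) converges to an equivalence class (all members achieving the same objective value) of critical points $(W,B,x)$ of $g$ that are also partial minimizers, satisfying: $x \in \arg\min_{\tilde x} g(W,B,\tilde x)$, $W \in \arg\min_{\tilde W} g(\tilde W,B,x)$, $B\in\arg\min_{\tilde B} g(W,\tilde B,x)$, and $g(W,B+\Delta B,x+\Delta x)\ge g(W,B,x)$ for all $\Delta x\in\mathbb{C}^p$ and all $\Delta B\in\mathbb{C}^{n\times N}$ with $\|\Delta B\|_\infty<\eta/2$.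
   Context: $B=[b_1|\cdots|b_N]\in\mathbb{C}^{n\times N}$; $\|b\|_0$ counts nonzeros; $\|H\|_\infty=\max_{i,j}|H_{ij}|$. A critical point is a generalized stationary point of $g$ ($0$ in the limiting subdifferential). $H_\eta$ is entrywise hard thresholding: $(H_\eta(\alpha))_i=0$ if $|\alpha_i|<\eta$, $=\alpha_i$ if $|\alpha_i|\ge\eta$. Algorithm A1: for $t=1,2,\dots$, with exact computations: (1) with $X=[P_1x^{t-1}|\cdots|P_Nx^{t-1}]$ and full SVD $X(B^{t-1})^H=U\Sigma V^H$, set $W^t=VU^H$; (2) $b_j^t=H_\eta(W^tP_jx^{t-1})$ for all $j$; (3) $x^t$ is a global minimizer of $\nu\|Ax-y\|_2^2+\sum_j\|W^tP_jx-b_j^t\|_2^2$ subject to $\|x\|_2\le C$. *)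

theory Defs
  imports "HOL-Analysis.Analysis"
begin

definition ctrans :: "complex^'b^'a \<Rightarrow> complex^'a^'b" where
  "ctrans M = (\<chi> i j. cnj (M $ j $ i))"

definition unitary_mat :: "complex^'n^'n \<Rightarrow> bool" where
  "unitary_mat W \<longleftrightarrow> ctrans W ** W = mat 1"

definition l0 :: "complex^'n \<Rightarrow> nat" where
  "l0 b = card {i. b $ i \<noteq> 0}"

definition hthr :: "real \<Rightarrow> complex^'n \<Rightarrow> complex^'n" where
  "hthr \<eta> a = (\<chi> i. if cmod (a $ i) < \<eta> then 0 else a $ i)"

definition diag_mat :: "('n \<Rightarrow> real) \<Rightarrow> complex^'n^'n" where
  "diag_mat \<sigma> = (\<chi> i k. if i = k then complex_of_real (\<sigma> i) else 0)"

text \<open>The objective g(W,B,x). The matrix B = [b_1|...|b_N] is stored by columns: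
  B $ j is the column b_j (so B has type complex^'n^'N).\<close>
definition gobj :: "real \<Rightarrow> complex^'p^'m \<Rightarrow> complex^'m \<Rightarrow> ('N \<Rightarrow> complex^'p^'n) \<Rightarrow> real \<Rightarrow> real
    \<Rightarrow> (complex^'n^'n) \<times> (complex^'n^'N::finite) \<times> (complex^'p) \<Rightarrow> ereal" where
  "gobj \<nu> A y P \<eta> C z = (case z of (W, B, x) \<Rightarrow>
     (if unitary_mat W \<and> norm x \<le> C then
        ereal (\<nu> * (norm (A *v x - y))\<^sup>2
               + (\<Sum>j\<in>UNIV. (norm (W *v (P j *v x) - B $ j))\<^sup>2 + \<eta>\<^sup>2 * real (l0 (B $ j))))
      else \<infinity>))"

definition frechet_subdiff :: "('a::real_inner \<Rightarrow> ereal) \<Rightarrow> 'a \<Rightarrow> 'a set" where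
  "frechet_subdiff f z = {v. \<bar>f z\<bar> \<noteq> \<infinity> \<and>
      Liminf (at z) (\<lambda>u. (f u - f z - ereal (v \<bullet> (u - z))) / ereal (norm (u - z))) \<ge> 0}"

definition limiting_subdiff :: "('a::real_inner \<Rightarrow> ereal) \<Rightarrow> 'a \<Rightarrow> 'a set" where
  "limiting_subdiff f z = {v. \<bar>f z\<bar> \<noteq> \<infinity> \<and>
      (\<exists>zk vk. zk \<longlonglongrightarrow> z \<and> (\<lambda>k. f (zk k)) \<longlonglongrightarrow> f z \<and>
               (\<forall>k. vk k \<in> frechet_subdiff f (zk k)) \<and> vk \<longlonglongrightarrow> v)}"

definition critical_point :: "('a::real_inner \<Rightarrow> ereal) \<Rightarrow> 'a \<Rightarrow> bool" where
  "critical_point f z \<longleftrightarrow> 0 \<in> limiting_subdiff f z"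

text \<open>The iterates (W^t,B^t,x^t), t \<ge> 1, of Algorithm A1 (any admissible choice of
  SVD and of global minimizer), from an arbitrary initialization (W^0,B^0,x^0).\<close>
definition A1_iterates :: "real \<Rightarrow> complex^'p^'m \<Rightarrow> complex^'m \<Rightarrow> ('N \<Rightarrow> complex^'p^'n) \<Rightarrow> real \<Rightarrow> real
    \<Rightarrow> (nat \<Rightarrow> complex^'n^'n) \<Rightarrow> (nat \<Rightarrow> complex^'n^'N::finite) \<Rightarrow> (nat \<Rightarrow> complex^'p) \<Rightarrow> bool" where
  "A1_iterates \<nu> A y P \<eta> C Wt Bt xt \<longleftrightarrow>
    (\<forall>t\<ge>1.
      (\<exists>U V \<sigma>. unitary_mat U \<and> unitary_mat V \<and> (\<forall>i. \<sigma> i \<ge> 0) \<and>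
         (\<chi> i k. \<Sum>j\<in>UNIV. (P j *v xt (t - 1)) $ i * cnj (Bt (t - 1) $ j $ k))
            = U ** diag_mat \<sigma> ** ctrans V \<and>
         Wt t = V ** ctrans U) \<and>
      (\<forall>j. Bt t $ j = hthr \<eta> (Wt t *v (P j *v xt (t - 1)))) \<and>
      norm (xt t) \<le> C \<and>
      (\<forall>x'. norm x' \<le> C \<longrightarrow>
         \<nu> * (norm (A *v xt t - y))\<^sup>2 + (\<Sum>j\<in>UNIV. (norm (Wt t *v (P j *v xt t) - Bt t $ j))\<^sup>2)
         \<le> \<nu> * (norm (A *v x' - y))\<^sup>2 + (\<Sum>j\<in>UNIV. (norm (Wt t *v (P j *v x') - Bt t $ j))\<^sup>2)))"

definition good_point :: "real \<Rightarrow> complex^'p^'m \<Rightarrow> complex^'m \<Rightarrow> ('N \<Rightarrow> complex^'p^'n) \<Rightarrow> real \<Rightarrow> real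
    \<Rightarrow> (complex^'n^'n) \<times> (complex^'n^'N::finite) \<times> (complex^'p) \<Rightarrow> bool" where
  "good_point \<nu> A y P \<eta> C z = (case z of (W, B, x) \<Rightarrow>
     critical_point (gobj \<nu> A y P \<eta> C) (W, B, x) \<and>
     (\<forall>x'. gobj \<nu> A y P \<eta> C (W, B, x) \<le> gobj \<nu> A y P \<eta> C (W, B, x')) \<and>
     (\<forall>W'. gobj \<nu> A y P \<eta> C (W, B, x) \<le> gobj \<nu> A y P \<eta> C (W', B, x)) \<and>
     (\<forall>B'. gobj \<nu> A y P \<eta> C (W, B, x) \<le> gobj \<nu> A y P \<eta> C (W, B', x)) \<and>
     (\<forall>dB dx. (\<forall>j i. cmod (dB $ j $ i) < \<eta> / 2) \<longrightarrow>
        gobj \<nu> A y P \<eta> C (W, B, x) \<le> gobj \<nu> A y P \<eta> C (W, B + dB, x + dx)))"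

end

theory Submission
  imports Defs
begin


lemma ctrans_nth[simp]: "ctrans M $ i $ j = cnj (M $ j $ i)"
  by (simp add: ctrans_def)

lemma ctrans_ctrans[simp]: "ctrans (ctrans M) = M"
  by (simp add: vec_eq_iff)

lemma ctrans_mult: "ctrans (A ** B) = ctrans B ** ctrans A"
  by (simp add: vec_eq_iff matrix_matrix_mult_def mult.commute)

lemma unitary_right:
  assumes "unitary_mat U" shows "U ** ctrans U = mat 1"
  using assms unfolding unitary_mat_def by (simp add: matrix_left_right_inverse)

lemma unitary_VUh:
  assumes "unitary_mat U" "unitary_mat V"
  shows "unitary_mat (V ** ctrans U)"
proof -
  have "ctrans (V ** ctrans U) ** (V ** ctrans U) = U ** (ctrans V ** V) ** ctrans U"
    by (simp add: ctrans_mult matrix_mul_assoc)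
  also have "\<dots> = mat 1" using assms unitary_right[OF assms(1)]
    by (simp add: unitary_mat_def matrix_mul_rid)
  finally show ?thesis by (simp add: unitary_mat_def)
qed

lemma unitary_mult:
  assumes "unitary_mat A" "unitary_mat B"
  shows "unitary_mat (A ** B)"
proof -
  have "ctrans (A ** B) ** (A ** B) = ctrans B ** (ctrans A ** A) ** B"
    by (simp add: ctrans_mult matrix_mul_assoc)
  also have "\<dots> = mat 1" using assms
    by (simp add: unitary_mat_def matrix_mul_lid)
  finally show ?thesis by (simp add: unitary_mat_def)
qed

lemma unitary_ctrans:
  assumes "unitary_mat A" shows "unitary_mat (ctrans A)"
  using unitary_right[OF assms] by (simp add: unitary_mat_def)

lemma norm_sq_vec: "(norm (v::complex^'n))\<^sup>2 = (\<Sum>i\<in>UNIV. (cmod (v $ i))\<^sup>2)"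
  unfolding norm_vec_def L2_set_def by (simp add: sum_nonneg)

lemma norm_sq_vec_complex: "complex_of_real ((norm (v::complex^'n))\<^sup>2) = (\<Sum>i\<in>UNIV. v $ i * cnj (v $ i))"
  unfolding norm_sq_vec by (simp only: of_real_sum complex_norm_square)

lemma inner_vec_complex: "inner (a::complex^'n) b = Re (\<Sum>i\<in>UNIV. a $ i * cnj (b $ i))"
  unfolding inner_vec_def by (simp add: inner_complex_def Re_sum)

lemma unitary_col:
  assumes "unitary_mat W"
  shows "(\<Sum>i\<in>UNIV. W $ i $ l * cnj (W $ i $ k)) = (if k = l then 1 else 0)"
proof -
  have "(ctrans W ** W) $ k $ l = (if k = l then 1 else 0)"
    using assms by (simp add: unitary_mat_def mat_def)
  thus ?thesis by (simp add: matrix_matrix_mult_def mult.commute)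
qed

lemma unitary_norm:
  assumes "unitary_mat W"
  shows "norm (W *v v) = norm v"
proof -
  have "complex_of_real ((norm (W *v v))\<^sup>2) = (\<Sum>i\<in>UNIV. (\<Sum>k\<in>UNIV. W$i$k * v$k) * cnj (\<Sum>l\<in>UNIV. W$i$l * v$l))"
    unfolding norm_sq_vec_complex by (simp add: matrix_vector_mult_def)
  also have "\<dots> = (\<Sum>i\<in>UNIV. \<Sum>k\<in>UNIV. \<Sum>l\<in>UNIV. v$k * cnj (v$l) * (W$i$k * cnj (W$i$l)))"
    by (simp add: cnj_sum sum_product mult_ac)
  also have "\<dots> = (\<Sum>k\<in>UNIV. \<Sum>i\<in>UNIV. \<Sum>l\<in>UNIV. v$k * cnj (v$l) * (W$i$k * cnj (W$i$l)))"
    by (rule sum.swap)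
  also have "\<dots> = (\<Sum>k\<in>UNIV. \<Sum>l\<in>UNIV. \<Sum>i\<in>UNIV. v$k * cnj (v$l) * (W$i$k * cnj (W$i$l)))"
    by (rule sum.cong[OF refl], rule sum.swap)
  also have "\<dots> = (\<Sum>k\<in>UNIV. \<Sum>l\<in>UNIV. v$k * cnj (v$l) * (\<Sum>i\<in>UNIV. W$i$k * cnj (W$i$l)))"
    by (simp add: sum_distrib_left)
  also have "\<dots> = (\<Sum>k\<in>UNIV. v$k * cnj (v$k))"
    by (simp add: unitary_col[OF assms] if_distrib sum.delta cong: if_cong)
  also have "\<dots> = complex_of_real ((norm v)\<^sup>2)"
    unfolding norm_sq_vec_complex ..
  finally have "(norm (W *v v))\<^sup>2 = (norm v)\<^sup>2" using of_real_eq_iff by blast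
  thus ?thesis by (simp add: power2_eq_iff_nonneg)
qed

lemma unitary_entry_sq:
  assumes "unitary_mat W"
  shows "(\<Sum>i\<in>UNIV. (cmod (W $ i $ k))\<^sup>2) = 1"
proof -
  have "complex_of_real (\<Sum>i\<in>UNIV. (cmod (W $ i $ k))\<^sup>2) = 1"
    using unitary_col[OF assms, of k k] by (simp only: of_real_sum complex_norm_square) simp
  thus ?thesis by (metis of_real_eq_1_iff)
qed

lemma unitary_norm_mat:
  assumes "unitary_mat (W::complex^'n^'n)"
  shows "norm W = sqrt (real CARD('n))"
proof -
  have "(norm W)\<^sup>2 = (\<Sum>i\<in>UNIV. (norm (W $ i))\<^sup>2)"
    unfolding norm_vec_def L2_set_def by (simp add: sum_nonneg)
  also have "\<dots> = (\<Sum>i\<in>UNIV. \<Sum>k\<in>UNIV. (cmod (W $ i $ k))\<^sup>2)"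
    by (simp add: norm_sq_vec)
  also have "\<dots> = (\<Sum>k\<in>(UNIV::'n set). 1)"
    by (subst sum.swap) (simp add: unitary_entry_sq[OF assms])
  finally show ?thesis by (simp add: real_sqrt_unique)
qed

lemma unitary_entry_le:
  assumes "unitary_mat W" shows "cmod (W $ i $ k) \<le> 1"
proof -
  have "(cmod (W $ i $ k))\<^sup>2 \<le> (\<Sum>i\<in>UNIV. (cmod (W $ i $ k))\<^sup>2)"
    by (rule member_le_sum) auto
  hence "(cmod (W $ i $ k))\<^sup>2 \<le> 1\<^sup>2" using unitary_entry_sq[OF assms] by simp
  thus ?thesis by (rule power2_le_imp_le) simp
qed

lemma inner_sum_trace:
  fixes a b :: "'N::finite \<Rightarrow> complex^'n" and W :: "complex^'n^'n"
  shows "(\<Sum>j\<in>UNIV. inner (W *v a j) (b j))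
     = Re (trace (W ** (\<chi> i k. \<Sum>j\<in>UNIV. a j $ i * cnj (b j $ k))))"
proof -
  have "(\<Sum>j\<in>UNIV. inner (W *v a j) (b j))
      = Re (\<Sum>j\<in>UNIV. \<Sum>i\<in>UNIV. \<Sum>k\<in>UNIV. W$i$k * (a j $ k * cnj (b j $ i)))"
    by (simp only: inner_vec_complex matrix_vector_mult_def vec_lambda_beta Re_sum sum_distrib_right mult.assoc)
  also have "(\<Sum>j\<in>UNIV. \<Sum>i\<in>UNIV. \<Sum>k\<in>UNIV. W$i$k * (a j $ k * cnj (b j $ i)))
      = (\<Sum>i\<in>UNIV. \<Sum>j\<in>UNIV. \<Sum>k\<in>UNIV. W$i$k * (a j $ k * cnj (b j $ i)))"
    by (rule sum.swap)
  also have "\<dots> = (\<Sum>i\<in>UNIV. \<Sum>k\<in>UNIV. \<Sum>j\<in>UNIV. W$i$k * (a j $ k * cnj (b j $ i)))"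
    by (rule sum.cong[OF refl], rule sum.swap)
  also have "\<dots> = trace (W ** (\<chi> i k. \<Sum>j\<in>UNIV. a j $ i * cnj (b j $ k)))"
    by (simp add: trace_def matrix_matrix_mult_def sum_distrib_left)
  finally show ?thesis .
qed

lemma trace_diag:
  "trace (Z ** diag_mat \<sigma>) = (\<Sum>i\<in>UNIV. Z $ i $ i * complex_of_real (\<sigma> i))"
  by (simp add: trace_def matrix_matrix_mult_def diag_mat_def if_distrib sum.delta' cong: if_cong)

lemma procrustes:
  fixes a b :: "'N::finite \<Rightarrow> complex^'n" and W U V :: "complex^'n^'n"
  assumes M: "(\<chi> i k. \<Sum>j\<in>UNIV. a j $ i * cnj (b j $ k)) = U ** diag_mat \<sigma> ** ctrans V"
    and U: "unitary_mat U" and V: "unitary_mat V" and sig: "\<forall>i. \<sigma> i \<ge> 0"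
    and W: "unitary_mat W"
  shows "(\<Sum>j\<in>UNIV. inner (W *v a j) (b j)) \<le> (\<Sum>j\<in>UNIV. inner ((V ** ctrans U) *v a j) (b j))"
proof -
  have key: "(\<Sum>j\<in>UNIV. inner (X *v a j) (b j))
     = Re (\<Sum>i\<in>UNIV. (ctrans V ** X ** U) $ i $ i * complex_of_real (\<sigma> i))" for X
  proof -
    have "trace (X ** (U ** diag_mat \<sigma> ** ctrans V)) = trace ((X ** U ** diag_mat \<sigma>) ** ctrans V)"
      by (simp add: matrix_mul_assoc)
    also have "\<dots> = trace (ctrans V ** (X ** U ** diag_mat \<sigma>))"
      by (rule trace_mul_sym)
    also have "\<dots> = trace ((ctrans V ** X ** U) ** diag_mat \<sigma>)"
      by (simp add: matrix_mul_assoc)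
    finally have "trace (X ** (U ** diag_mat \<sigma> ** ctrans V)) = trace ((ctrans V ** X ** U) ** diag_mat \<sigma>)" .
    thus ?thesis unfolding inner_sum_trace M trace_diag by simp
  qed
  have ZW: "unitary_mat (ctrans V ** W ** U)"
    by (intro unitary_mult unitary_ctrans V W U)
  have "Re (\<Sum>i\<in>UNIV. (ctrans V ** W ** U) $ i $ i * complex_of_real (\<sigma> i))
      = (\<Sum>i\<in>UNIV. \<sigma> i * Re ((ctrans V ** W ** U) $ i $ i))"
    by (simp add: Re_sum mult.commute)
  also have "\<dots> \<le> (\<Sum>i\<in>UNIV. \<sigma> i * 1)"
  proof (rule sum_mono)
    fix i
    have "Re ((ctrans V ** W ** U) $ i $ i) \<le> 1"
      using unitary_entry_le[OF ZW, of i i] complex_Re_le_cmod order_trans by blast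
    thus "\<sigma> i * Re ((ctrans V ** W ** U) $ i $ i) \<le> \<sigma> i * 1"
      using sig mult_left_mono[of _ 1 "\<sigma> i"] by simp
  qed
  also have "\<dots> = Re (\<Sum>i\<in>UNIV. (ctrans V ** (V ** ctrans U) ** U) $ i $ i * complex_of_real (\<sigma> i))"
  proof -
    have "ctrans V ** (V ** ctrans U) ** U = (ctrans V ** V) ** (ctrans U ** U)"
      by (simp add: matrix_mul_assoc)
    also have "\<dots> = mat 1" using U V by (simp add: unitary_mat_def)
    finally show ?thesis by (simp add: Re_sum mat_def)
  qed
  finally show ?thesis unfolding key .
qed

definition Qf :: "real \<Rightarrow> complex^'p^'m \<Rightarrow> complex^'m \<Rightarrow> ('N::finite \<Rightarrow> complex^'p^'n)
   \<Rightarrow> complex^'n^'n \<Rightarrow> complex^'n^'N \<Rightarrow> complex^'p \<Rightarrow> real" where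
  "Qf \<nu> A y P W B x = \<nu> * (norm (A *v x - y))\<^sup>2 + (\<Sum>j\<in>UNIV. (norm (W *v (P j *v x) - B $ j))\<^sup>2)"

definition L0 :: "complex^'n^'N::finite \<Rightarrow> real" where
  "L0 B = (\<Sum>j\<in>UNIV. real (l0 (B $ j)))"

lemma gobj_eq: "gobj \<nu> A y P \<eta> C (W, B, x) =
   (if unitary_mat W \<and> norm x \<le> C then ereal (Qf \<nu> A y P W B x + \<eta>\<^sup>2 * L0 B) else \<infinity>)"
  by (simp add: gobj_def Qf_def L0_def sum.distrib sum_distrib_left add.assoc)

lemma norm_diff_sq: "(norm (a - b :: 'a::real_inner))\<^sup>2 = (norm a)\<^sup>2 - 2 * inner a b + (norm b)\<^sup>2"
  by (simp add: power2_norm_eq_inner inner_diff_left inner_diff_right inner_commute)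

lemma norm_add_sq: "(norm (a + b :: 'a::real_inner))\<^sup>2 = (norm a)\<^sup>2 + 2 * inner a b + (norm b)\<^sup>2"
  by (simp add: power2_norm_eq_inner inner_add_left inner_add_right inner_commute)

lemma Qf_unitary:
  assumes "unitary_mat W"
  shows "Qf \<nu> A y P W B x = \<nu> * (norm (A *v x - y))\<^sup>2
     + (\<Sum>j\<in>UNIV. (norm (P j *v x))\<^sup>2 + (norm (B $ j))\<^sup>2) - 2 * (\<Sum>j\<in>UNIV. inner (W *v (P j *v x)) (B $ j))"
  unfolding Qf_def norm_diff_sq unitary_norm[OF assms]
  by (simp add: sum.distrib sum_subtractf sum_distrib_left algebra_simps)

lemma Wstep:
  assumes M: "(\<chi> i k. \<Sum>j\<in>UNIV. (P j *v x) $ i * cnj (B $ j $ k)) = U ** diag_mat \<sigma> ** ctrans V"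
    and U: "unitary_mat U" and V: "unitary_mat V" and sig: "\<forall>i. \<sigma> i \<ge> 0"
    and W: "unitary_mat W"
  shows "Qf \<nu> A y P (V ** ctrans U) B x \<le> Qf \<nu> A y P W B x"
  using procrustes[of "\<lambda>j. P j *v x" "\<lambda>j. B $ j", OF M U V sig W]
  unfolding Qf_unitary[OF W] Qf_unitary[OF unitary_VUh[OF U V]] by simp

definition compat :: "real \<Rightarrow> complex^'n \<Rightarrow> complex^'n \<Rightarrow> bool" where
  "compat \<eta> a b \<longleftrightarrow> (\<forall>i. (b $ i = 0 \<and> cmod (a $ i) \<le> \<eta>) \<or> (b $ i = a $ i \<and> \<eta> \<le> cmod (a $ i)))"

lemma hthr_compat: "compat \<eta> a (hthr \<eta> a)"
  by (auto simp: compat_def hthr_def)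

lemma l0_sum: "real (l0 b) = (\<Sum>i\<in>UNIV. if b $ i \<noteq> 0 then 1 else 0)"
proof -
  have "(\<Sum>i\<in>UNIV. if b $ i \<noteq> 0 then (1::real) else 0) = (\<Sum>i\<in>{i\<in>UNIV. b $ i \<noteq> 0}. 1)"
    by (rule sum.inter_filter[symmetric]) simp
  thus ?thesis by (simp add: l0_def)
qed

lemma compat_coord:
  assumes "\<eta> > 0" "(\<beta>0 = 0 \<and> cmod \<alpha> \<le> \<eta>) \<or> (\<beta>0 = \<alpha> \<and> \<eta> \<le> cmod \<alpha>)"
  shows "(cmod (\<alpha> - \<beta>0))\<^sup>2 + \<eta>\<^sup>2 * (if \<beta>0 \<noteq> 0 then 1 else 0)
       \<le> (cmod (\<alpha> - \<beta>))\<^sup>2 + \<eta>\<^sup>2 * (if \<beta> \<noteq> 0 then 1 else 0)"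
  using assms(2)
proof
  assume h: "\<beta>0 = 0 \<and> cmod \<alpha> \<le> \<eta>"
  have "(cmod \<alpha>)\<^sup>2 \<le> \<eta>\<^sup>2" using h by (simp add: power_mono)
  moreover have "0 \<le> (cmod (\<alpha> - \<beta>))\<^sup>2" by simp
  ultimately have "(cmod \<alpha>)\<^sup>2 \<le> (cmod (\<alpha> - \<beta>))\<^sup>2 + \<eta>\<^sup>2" by linarith
  thus ?thesis using h by auto
next
  assume h: "\<beta>0 = \<alpha> \<and> \<eta> \<le> cmod \<alpha>"
  have "\<eta>\<^sup>2 \<le> (cmod \<alpha>)\<^sup>2" using h assms(1) by (simp add: power_mono)
  moreover have "\<alpha> \<noteq> 0" using h assms(1) by auto
  ultimately show ?thesis using h by auto
qed

lemma compat_min: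
  assumes "\<eta> > 0" "compat \<eta> a b0"
  shows "(norm (a - b0))\<^sup>2 + \<eta>\<^sup>2 * real (l0 b0) \<le> (norm (a - b))\<^sup>2 + \<eta>\<^sup>2 * real (l0 b)"
proof -
  have "(norm (a - b0))\<^sup>2 + \<eta>\<^sup>2 * real (l0 b0)
     = (\<Sum>i\<in>UNIV. (cmod (a$i - b0$i))\<^sup>2 + \<eta>\<^sup>2 * (if b0 $ i \<noteq> 0 then 1 else 0))"
    unfolding norm_sq_vec l0_sum by (simp add: sum.distrib sum_distrib_left)
  also have "\<dots> \<le> (\<Sum>i\<in>UNIV. (cmod (a$i - b$i))\<^sup>2 + \<eta>\<^sup>2 * (if b $ i \<noteq> 0 then 1 else 0))"
    by (rule sum_mono, rule compat_coord) (use assms in \<open>auto simp: compat_def\<close>)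
  also have "\<dots> = (norm (a - b))\<^sup>2 + \<eta>\<^sup>2 * real (l0 b)"
    unfolding norm_sq_vec l0_sum by (simp add: sum.distrib sum_distrib_left)
  finally show ?thesis .
qed

lemma small_lin:
  fixes l q :: real
  assumes "\<And>s. 0 < s \<Longrightarrow> s \<le> 1 \<Longrightarrow> 0 \<le> l + s * q" "0 \<le> q"
  shows "0 \<le> l"
proof (rule ccontr)
  assume "\<not> 0 \<le> l"
  hence l: "l < 0" by simp
  define s where "s = min 1 (- l / (2 * (q + 1)))"
  have "0 < - l / (2 * (q + 1))" using l assms(2) by (intro divide_pos_pos) auto
  hence s0: "0 < s" unfolding s_def by simp
  have s1: "s \<le> 1" by (simp add: s_def)
  have "s * q \<le> (- l / (2 * (q + 1))) * q"
    using assms(2) by (intro mult_right_mono) (auto simp: s_def)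
  also have "\<dots> \<le> - l / 2"
    using l assms(2) by (simp add: field_simps)
  finally have "l + s * q < 0" using l by simp
  thus False using assms(1)[OF s0 s1] by simp
qed

lemma mv_scaleR: "M *v (s *\<^sub>R (v::complex^'a)) = s *\<^sub>R (M *v v)"
  by (simp add: vec_eq_iff matrix_vector_mult_def scaleR_sum_right)

lemma Qf_expand:
  "Qf \<nu> A y P W B (x + d) = Qf \<nu> A y P W B x
     + (2 * \<nu> * inner (A *v x - y) (A *v d) + (\<Sum>j\<in>UNIV. 2 * inner (W *v (P j *v x) - B $ j) (W *v (P j *v d))))
     + (\<nu> * (norm (A *v d))\<^sup>2 + (\<Sum>j\<in>UNIV. (norm (W *v (P j *v d)))\<^sup>2))"
proof -
  have e1: "A *v (x + d) - y = (A *v x - y) + A *v d" by (simp add: matrix_vector_right_distrib)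
  have e2: "W *v (P j *v (x + d)) - B $ j = (W *v (P j *v x) - B $ j) + W *v (P j *v d)" for j
    by (simp add: matrix_vector_right_distrib)
  show ?thesis unfolding Qf_def e1 e2 norm_add_sq
    by (simp add: sum.distrib sum_subtractf algebra_simps)
qed

lemma Qf_lin_nonneg:
  assumes x0: "norm x0 \<le> C" and x1: "norm (x0 + d) \<le> C"
    and min: "\<forall>x'. norm x' \<le> C \<longrightarrow> Qf \<nu> A y P W B x0 \<le> Qf \<nu> A y P W B x'"
    and nu: "\<nu> \<ge> 0"
  shows "0 \<le> 2 * \<nu> * inner (A *v x0 - y) (A *v d) + (\<Sum>j\<in>UNIV. 2 * inner (W *v (P j *v x0) - B $ j) (W *v (P j *v d)))"
    (is "0 \<le> ?l")
proof (rule small_lin)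
  let ?q = "\<nu> * (norm (A *v d))\<^sup>2 + (\<Sum>j\<in>UNIV. (norm (W *v (P j *v d)))\<^sup>2)"
  show "0 \<le> ?q" using nu by (simp add: sum_nonneg)
  fix s :: real assume s: "0 < s" "s \<le> 1"
  have "norm (x0 + s *\<^sub>R d) = norm ((1 - s) *\<^sub>R x0 + s *\<^sub>R (x0 + d))"
    by (simp add: algebra_simps)
  also have "\<dots> \<le> (1 - s) * norm x0 + s * norm (x0 + d)"
    using s by (smt (verit) norm_scaleR norm_triangle_ineq)
  also have "\<dots> \<le> (1 - s) * C + s * C"
    using s x0 x1 by (intro add_mono mult_left_mono) auto
  finally have "norm (x0 + s *\<^sub>R d) \<le> C" by (simp add: algebra_simps)
  have abs_s: "\<bar>s\<bar> = s" using s by simp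
  have "Qf \<nu> A y P W B x0 \<le> Qf \<nu> A y P W B (x0 + s *\<^sub>R d)" using min \<open>norm (x0 + s *\<^sub>R d) \<le> C\<close> by blast
  also have "\<dots> = Qf \<nu> A y P W B x0 + s * ?l + s * s * ?q"
    unfolding Qf_expand mv_scaleR using abs_s
    by (simp add: power2_eq_square sum_distrib_left algebra_simps)
  finally have "0 \<le> s * (?l + s * ?q)" by (simp add: algebra_simps)
  thus "0 \<le> ?l + s * ?q" using s by (simp add: zero_le_mult_iff)
qed

lemma Qf_xstep:
  assumes W: "unitary_mat W" and x0: "norm x0 \<le> C" and x1: "norm x1 \<le> C"
    and min: "\<forall>x'. norm x' \<le> C \<longrightarrow> Qf \<nu> A y P W B x0 \<le> Qf \<nu> A y P W B x'"
    and nu: "\<nu> \<ge> 0"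
  shows "Qf \<nu> A y P W B x0 + (\<Sum>j\<in>UNIV. (norm (P j *v (x1 - x0)))\<^sup>2) \<le> Qf \<nu> A y P W B x1"
proof -
  define d where "d = x1 - x0"
  have x1d: "x1 = x0 + d" by (simp add: d_def)
  have "0 \<le> 2 * \<nu> * inner (A *v x0 - y) (A *v d) + (\<Sum>j\<in>UNIV. 2 * inner (W *v (P j *v x0) - B $ j) (W *v (P j *v d)))"
    by (rule Qf_lin_nonneg[OF x0 _ min nu]) (use x1 x1d in simp)
  moreover have "0 \<le> \<nu> * (norm (A *v d))\<^sup>2" using nu by simp
  ultimately show ?thesis unfolding x1d Qf_expand unitary_norm[OF W] d_def[symmetric]
    by simp
qed

lemma coord_local:
  assumes eta: "\<eta> > 0" and h: "(\<beta> = 0 \<and> cmod \<alpha> \<le> \<eta>) \<or> (\<beta> = \<alpha> \<and> \<eta> \<le> cmod \<alpha>)"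
    and d: "cmod \<delta> < \<eta> / 2"
  shows "\<eta>\<^sup>2 * (if \<beta> \<noteq> 0 then 1 else 0) \<le> - 2 * inner (\<alpha> - \<beta>) \<delta> + \<eta>\<^sup>2 * (if \<beta> + \<delta> \<noteq> 0 then 1 else 0)"
  using h
proof
  assume h: "\<beta> = 0 \<and> cmod \<alpha> \<le> \<eta>"
  show ?thesis
  proof (cases "\<delta> = 0")
    case True thus ?thesis using h by simp
  next
    case False
    have "inner \<alpha> \<delta> \<le> cmod \<alpha> * cmod \<delta>" by (rule norm_cauchy_schwarz)
    also have "\<dots> \<le> \<eta> * (\<eta> / 2)" using h d eta by (intro mult_mono) auto
    finally have "2 * inner \<alpha> \<delta> \<le> \<eta>\<^sup>2" by (simp add: power2_eq_square)
    thus ?thesis using h False by simp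
  qed
next
  assume h: "\<beta> = \<alpha> \<and> \<eta> \<le> cmod \<alpha>"
  have "\<beta> + \<delta> \<noteq> 0"
  proof
    assume "\<beta> + \<delta> = 0"
    hence "cmod \<beta> = cmod \<delta>" by (metis add_eq_0_iff norm_minus_cancel)
    thus False using h d eta by simp
  qed
  thus ?thesis using h by simp
qed

lemma vec_local:
  assumes eta: "\<eta> > 0" and c: "compat \<eta> a b" and d: "\<forall>i. cmod (db $ i) < \<eta> / 2"
  shows "\<eta>\<^sup>2 * real (l0 b) \<le> - 2 * inner (a - b) db + \<eta>\<^sup>2 * real (l0 (b + db))"
proof -
  have "\<eta>\<^sup>2 * real (l0 b) = (\<Sum>i\<in>UNIV. \<eta>\<^sup>2 * (if b $ i \<noteq> 0 then 1 else 0))"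
    unfolding l0_sum by (simp add: sum_distrib_left)
  also have "\<dots> \<le> (\<Sum>i\<in>UNIV. - 2 * inner (a $ i - b $ i) (db $ i) + \<eta>\<^sup>2 * (if b $ i + db $ i \<noteq> 0 then 1 else 0))"
    by (rule sum_mono, rule coord_local[OF eta]) (use c d in \<open>auto simp: compat_def\<close>)
  also have "\<dots> = - 2 * inner (a - b) db + \<eta>\<^sup>2 * real (l0 (b + db))"
    unfolding l0_sum inner_vec_def by (simp add: sum.distrib sum_subtractf sum_distrib_left sum_negf)
  finally show ?thesis .
qed

lemma local_opt:
  assumes eta: "\<eta> > 0" and nu: "\<nu> \<ge> 0" and W: "unitary_mat W" and x: "norm x \<le> C"
    and xmin: "\<forall>x'. norm x' \<le> C \<longrightarrow> Qf \<nu> A y P W B x \<le> Qf \<nu> A y P W B x'"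
    and comp: "\<forall>j. compat \<eta> (W *v (P j *v x)) (B $ j)"
    and dB: "\<forall>j i. cmod (dB $ j $ i) < \<eta> / 2"
  shows "gobj \<nu> A y P \<eta> C (W, B, x) \<le> gobj \<nu> A y P \<eta> C (W, B + dB, x + dx)"
proof (cases "norm (x + dx) \<le> C")
  case False thus ?thesis by (simp add: gobj_eq)
next
  case True
  let ?r = "\<lambda>j. W *v (P j *v x) - B $ j"
  let ?w = "\<lambda>j. W *v (P j *v dx)"
  have lin: "0 \<le> 2 * \<nu> * inner (A *v x - y) (A *v dx) + (\<Sum>j\<in>UNIV. 2 * inner (?r j) (?w j))"
    by (rule Qf_lin_nonneg[OF x True xmin nu])
  have e1: "A *v (x + dx) - y = (A *v x - y) + A *v dx" by (simp add: matrix_vector_right_distrib)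
  have pa: "\<nu> * (norm (A *v (x + dx) - y))\<^sup>2 \<ge> \<nu> * (norm (A *v x - y))\<^sup>2 + 2 * \<nu> * inner (A *v x - y) (A *v dx)"
  proof -
    have "\<nu> * (norm (A *v (x + dx) - y))\<^sup>2 = \<nu> * (norm (A *v x - y))\<^sup>2 + 2 * \<nu> * inner (A *v x - y) (A *v dx) + \<nu> * (norm (A *v dx))\<^sup>2"
      unfolding e1 norm_add_sq by (simp add: algebra_simps)
    moreover have "0 \<le> \<nu> * (norm (A *v dx))\<^sup>2" using nu by simp
    ultimately show ?thesis by linarith
  qed
  have pj: "(norm (W *v (P j *v (x + dx)) - (B + dB) $ j))\<^sup>2 \<ge>
      (norm (?r j))\<^sup>2 + 2 * inner (?r j) (?w j) - 2 * inner (?r j) (dB $ j)" for j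
  proof -
    have e2: "W *v (P j *v (x + dx)) - (B + dB) $ j = ?r j + (?w j - dB $ j)"
      by (simp add: matrix_vector_right_distrib)
    have "(norm (W *v (P j *v (x + dx)) - (B + dB) $ j))\<^sup>2 = (norm (?r j))\<^sup>2 + 2 * inner (?r j) (?w j - dB $ j) + (norm (?w j - dB $ j))\<^sup>2"
      unfolding e2 norm_add_sq ..
    moreover have "0 \<le> (norm (?w j - dB $ j))\<^sup>2" by simp
    ultimately show ?thesis by (simp add: inner_diff_right)
  qed
  have "Qf \<nu> A y P W (B + dB) (x + dx) \<ge> Qf \<nu> A y P W B x + (2 * \<nu> * inner (A *v x - y) (A *v dx) + (\<Sum>j\<in>UNIV. 2 * inner (?r j) (?w j)))
      - (\<Sum>j\<in>UNIV. 2 * inner (?r j) (dB $ j))"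
  proof -
    have "(\<Sum>j\<in>UNIV. (norm (W *v (P j *v (x + dx)) - (B + dB) $ j))\<^sup>2) \<ge>
       (\<Sum>j\<in>UNIV. (norm (?r j))\<^sup>2 + 2 * inner (?r j) (?w j) - 2 * inner (?r j) (dB $ j))"
      by (rule sum_mono) (rule pj)
    thus ?thesis using pa unfolding Qf_def by (simp add: sum.distrib sum_subtractf)
  qed
  hence q: "Qf \<nu> A y P W (B + dB) (x + dx) \<ge> Qf \<nu> A y P W B x - (\<Sum>j\<in>UNIV. 2 * inner (?r j) (dB $ j))"
    using lin by linarith
  have l: "\<eta>\<^sup>2 * L0 B \<le> - (\<Sum>j\<in>UNIV. 2 * inner (?r j) (dB $ j)) + \<eta>\<^sup>2 * L0 (B + dB)"
  proof -
    have "\<eta>\<^sup>2 * L0 B = (\<Sum>j\<in>UNIV. \<eta>\<^sup>2 * real (l0 (B $ j)))" by (simp add: L0_def sum_distrib_left)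
    also have "\<dots> \<le> (\<Sum>j\<in>UNIV. - 2 * inner (?r j) (dB $ j) + \<eta>\<^sup>2 * real (l0 (B $ j + dB $ j)))"
      by (rule sum_mono, rule vec_local[OF eta]) (use comp dB in auto)
    also have "\<dots> = - (\<Sum>j\<in>UNIV. 2 * inner (?r j) (dB $ j)) + \<eta>\<^sup>2 * L0 (B + dB)"
      by (simp add: L0_def sum.distrib sum_subtractf sum_distrib_left sum_negf)
    finally show ?thesis .
  qed
  show ?thesis using q l True x W by (simp add: gobj_eq)
qed



lemma norm_le_sum_vec: "norm (v::complex^'a) \<le> (\<Sum>i\<in>UNIV. cmod (v $ i))"
  by (simp add: norm_vec_def L2_set_le_sum)

lemma mv_bound: "norm (M *v (v::complex^'c)) \<le> real CARD('r) * real CARD('c) * norm (M::complex^'c^'r) * norm v"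
proof -
  have c: "cmod ((M *v v) $ i) \<le> real CARD('c) * (norm M * norm v)" for i
  proof -
    have "cmod ((M *v v) $ i) = cmod (\<Sum>k\<in>UNIV. M $ i $ k * v $ k)" by (simp add: matrix_vector_mult_def)
    also have "\<dots> \<le> (\<Sum>k\<in>UNIV. cmod (M $ i $ k) * cmod (v $ k))"
      by (rule order_trans[OF norm_sum]) (simp add: norm_mult)
    also have "\<dots> \<le> (\<Sum>k\<in>(UNIV::'c set). norm M * norm v)"
    proof (rule sum_mono)
      fix k
      have "cmod (M $ i $ k) \<le> norm (M $ i)" by (rule Finite_Cartesian_Product.norm_nth_le)
      also have "\<dots> \<le> norm M" by (rule Finite_Cartesian_Product.norm_nth_le)
      finally have "cmod (M $ i $ k) \<le> norm M" .
      moreover have "cmod (v $ k) \<le> norm v" by (rule Finite_Cartesian_Product.norm_nth_le)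
      ultimately show "cmod (M $ i $ k) * cmod (v $ k) \<le> norm M * norm v"
        by (intro mult_mono) auto
    qed
    finally show ?thesis by simp
  qed
  have "norm (M *v v) \<le> (\<Sum>i\<in>UNIV. cmod ((M *v v) $ i))" by (rule norm_le_sum_vec)
  also have "\<dots> \<le> (\<Sum>i\<in>(UNIV::'r set). real CARD('c) * (norm M * norm v))"
    by (rule sum_mono) (rule c)
  finally show ?thesis by (simp add: mult_ac)
qed

lemma inner_mv_bound: "inner (M *v (v::complex^'c)) w \<le> real CARD('r) * real CARD('c) * norm (M::complex^'c^'r) * norm v * norm w"
proof -
  have "inner (M *v v) w \<le> norm (M *v v) * norm w" by (rule norm_cauchy_schwarz)
  also have "\<dots> \<le> real CARD('r) * real CARD('c) * norm M * norm v * norm w"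
    by (rule mult_right_mono[OF mv_bound]) simp
  finally show ?thesis .
qed

lemma mv_diff_left: "(M1 - M2) *v v = M1 *v v - M2 *v (v::complex^'c)"
  by (simp add: matrix_vector_mult_diff_rdistrib)

lemma crit_bound:
  fixes W :: "complex^'n^'n" and B :: "complex^'n^'N::finite" and x :: "complex^'p"
  assumes eta: "\<eta> > 0" and nu: "\<nu> \<ge> 0" and W: "unitary_mat W" and x: "norm x \<le> C"
    and Wmin: "\<forall>W'. unitary_mat W' \<longrightarrow> Qf \<nu> A y P W B x \<le> Qf \<nu> A y P W' B x"
    and LP: "\<forall>dB dx. (\<forall>j i. cmod (dB $ j $ i) < \<eta> / 2) \<longrightarrow>
        gobj \<nu> A y P \<eta> C (W, B, x) \<le> gobj \<nu> A y P \<eta> C (W, B + dB, x + dx)"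
  shows "\<exists>K\<ge>0. \<forall>W' B' x'. unitary_mat W' \<longrightarrow> norm x' \<le> C \<longrightarrow> norm (B' - B) < \<eta> / 2 \<longrightarrow>
      Qf \<nu> A y P W B x + \<eta>\<^sup>2 * L0 B - 2 * K * (norm (W' - W) * (norm (x' - x) + norm (B' - B)))
        \<le> Qf \<nu> A y P W' B' x' + \<eta>\<^sup>2 * L0 B'"
proof -
  define \<kappa> where "\<kappa> = real CARD('n) * real CARD('n)"
  define c1 where "c1 = (\<lambda>j. \<kappa> * (real CARD('n) * real CARD('p) * norm (P j)) * (norm B + \<eta> / 2))"
  define c2 where "c2 = (\<lambda>j. \<kappa> * norm (P j *v x))"
  define K where "K = (\<Sum>j\<in>UNIV. c1 j + c2 j)"
  have c1: "0 \<le> c1 j" for j using eta by (simp add: c1_def \<kappa>_def)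
  have c2: "0 \<le> c2 j" for j by (simp add: c2_def \<kappa>_def)
  have K0: "0 \<le> K" unfolding K_def using c1 c2 by (simp add: sum_nonneg add_nonneg_nonneg)
  show ?thesis
  proof (intro exI[of _ K] conjI allI impI K0)
    fix W' :: "complex^'n^'n" and B' :: "complex^'n^'N" and x' :: "complex^'p"
    assume W': "unitary_mat W'" and x': "norm x' \<le> C" and B': "norm (B' - B) < \<eta> / 2"
    let ?E = "W' - W"
    define d where "d = x' - x"
    define dB where "dB = B' - B"
    have x'd: "x' = x + d" and B'd: "B' = B + dB" by (simp_all add: d_def dB_def)
    have ent: "\<forall>j i. cmod (dB $ j $ i) < \<eta> / 2"
    proof (intro allI)
      fix j i
      have "cmod (dB $ j $ i) \<le> norm (dB $ j)" by (rule Finite_Cartesian_Product.norm_nth_le)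
      also have "\<dots> \<le> norm dB" by (rule Finite_Cartesian_Product.norm_nth_le)
      finally show "cmod (dB $ j $ i) < \<eta> / 2" using B' unfolding dB_def by simp
    qed
    have lp: "Qf \<nu> A y P W B x + \<eta>\<^sup>2 * L0 B \<le> Qf \<nu> A y P W B' x' + \<eta>\<^sup>2 * L0 B'"
      using LP[rule_format, OF ent[rule_format], of d] x x' W unfolding x'd B'd by (simp add: gobj_eq)
    have wm: "(\<Sum>j\<in>UNIV. inner (W' *v (P j *v x)) (B $ j)) \<le> (\<Sum>j\<in>UNIV. inner (W *v (P j *v x)) (B $ j))"
      using Wmin[rule_format, OF W'] unfolding Qf_unitary[OF W] Qf_unitary[OF W'] by simp
    have nB': "norm (B' $ j) \<le> norm B + \<eta> / 2" for j
    proof -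
      have "norm (B' $ j) \<le> norm B'" by (rule Finite_Cartesian_Product.norm_nth_le)
      also have "\<dots> \<le> norm B + norm (B' - B)" by (metis add.commute diff_add_cancel norm_triangle_ineq)
      finally show ?thesis using B' by simp
    qed
    have pj: "inner (W' *v (P j *v x')) (B' $ j) - inner (W *v (P j *v x')) (B' $ j)
       \<le> (inner (W' *v (P j *v x)) (B $ j) - inner (W *v (P j *v x)) (B $ j))
          + norm ?E * (c1 j * norm d + c2 j * norm dB)" for j
    proof -
      have eq: "inner (W' *v (P j *v x')) (B' $ j) - inner (W *v (P j *v x')) (B' $ j)
        = (inner (W' *v (P j *v x)) (B $ j) - inner (W *v (P j *v x)) (B $ j))
          + inner (?E *v (P j *v d)) (B' $ j) + inner (?E *v (P j *v x)) (dB $ j)"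
        unfolding x'd B'd mv_diff_left
        by (simp add: matrix_vector_right_distrib inner_diff_left inner_add_left inner_add_right inner_diff_right)
      have b1: "inner (?E *v (P j *v d)) (B' $ j) \<le> norm ?E * (c1 j * norm d)"
      proof -
        have "inner (?E *v (P j *v d)) (B' $ j) \<le> \<kappa> * norm ?E * norm (P j *v d) * norm (B' $ j)"
          using inner_mv_bound[of ?E "P j *v d" "B' $ j"] by (simp add: \<kappa>_def)
        also have "\<dots> \<le> \<kappa> * norm ?E * (real CARD('n) * real CARD('p) * norm (P j) * norm d) * (norm B + \<eta> / 2)"
          by (intro mult_mono mv_bound nB' mult_nonneg_nonneg) (auto simp: \<kappa>_def)
        also have "\<dots> = norm ?E * (c1 j * norm d)" by (simp add: c1_def mult_ac)
        finally show ?thesis .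
      qed
      have b2: "inner (?E *v (P j *v x)) (dB $ j) \<le> norm ?E * (c2 j * norm dB)"
      proof -
        have "inner (?E *v (P j *v x)) (dB $ j) \<le> \<kappa> * norm ?E * norm (P j *v x) * norm (dB $ j)"
          using inner_mv_bound[of ?E "P j *v x" "dB $ j"] by (simp add: \<kappa>_def)
        also have "\<dots> \<le> \<kappa> * norm ?E * norm (P j *v x) * norm dB"
          by (intro mult_left_mono Finite_Cartesian_Product.norm_nth_le) (auto simp: \<kappa>_def)
        also have "\<dots> = norm ?E * (c2 j * norm dB)" by (simp add: c2_def mult_ac)
        finally show ?thesis .
      qed
      show ?thesis using eq b1 b2 by (simp add: distrib_left)
    qed
    have ck: "c1 j * norm d + c2 j * norm dB \<le> (c1 j + c2 j) * (norm d + norm dB)" for j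
      using c1[of j] c2[of j] by (simp add: algebra_simps)
    have "(\<Sum>j\<in>UNIV. inner (W' *v (P j *v x')) (B' $ j)) - (\<Sum>j\<in>UNIV. inner (W *v (P j *v x')) (B' $ j))
       \<le> (\<Sum>j\<in>UNIV. (inner (W' *v (P j *v x)) (B $ j) - inner (W *v (P j *v x)) (B $ j))
          + norm ?E * ((c1 j + c2 j) * (norm d + norm dB)))"
      unfolding sum_subtractf[symmetric]
      by (rule sum_mono, rule order_trans[OF pj]) (simp add: mult_left_mono ck)
    also have "\<dots> = (\<Sum>j\<in>UNIV. inner (W' *v (P j *v x)) (B $ j)) - (\<Sum>j\<in>UNIV. inner (W *v (P j *v x)) (B $ j))
          + (\<Sum>j\<in>UNIV. norm ?E * ((c1 j + c2 j) * (norm d + norm dB)))"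
      by (simp only: sum.distrib sum_subtractf)
    also have "(\<Sum>j\<in>UNIV. norm ?E * ((c1 j + c2 j) * (norm d + norm dB))) = norm ?E * K * (norm d + norm dB)"
      unfolding K_def by (simp only: sum_distrib_left[symmetric] sum_distrib_right[symmetric])
    finally have S: "(\<Sum>j\<in>UNIV. inner (W' *v (P j *v x')) (B' $ j)) - (\<Sum>j\<in>UNIV. inner (W *v (P j *v x')) (B' $ j))
       \<le> norm ?E * K * (norm d + norm dB)" using wm by linarith
    have "Qf \<nu> A y P W' B' x' = Qf \<nu> A y P W B' x'
        - 2 * ((\<Sum>j\<in>UNIV. inner (W' *v (P j *v x')) (B' $ j)) - (\<Sum>j\<in>UNIV. inner (W *v (P j *v x')) (B' $ j)))"
      unfolding Qf_unitary[OF W] Qf_unitary[OF W'] by simp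
    moreover have "norm ?E * K * (norm d + norm dB) = K * (norm (W' - W) * (norm (x' - x) + norm (B' - B)))"
      by (simp add: d_def dB_def mult_ac)
    moreover have "2 * K * (norm (W' - W) * (norm (x' - x) + norm (B' - B))) = 2 * (K * (norm (W' - W) * (norm (x' - x) + norm (B' - B))))"
      by simp
    ultimately show "Qf \<nu> A y P W B x + \<eta>\<^sup>2 * L0 B - 2 * K * (norm (W' - W) * (norm (x' - x) + norm (B' - B)))
        \<le> Qf \<nu> A y P W' B' x' + \<eta>\<^sup>2 * L0 B'"
      using S lp by (smt (verit))
  qed
qed



lemma ereal_eps_aux: "- ereal e \<le> (L::ereal) \<Longrightarrow> 0 \<le> L + ereal e"
  by (cases L) auto

lemma crit:
  fixes W :: "complex^'n^'n" and B :: "complex^'n^'N::finite" and x :: "complex^'p"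
  assumes eta: "\<eta> > 0" and nu: "\<nu> \<ge> 0" and W: "unitary_mat W" and x: "norm x \<le> C"
    and Wmin: "\<forall>W'. unitary_mat W' \<longrightarrow> Qf \<nu> A y P W B x \<le> Qf \<nu> A y P W' B x"
    and LP: "\<forall>dB dx. (\<forall>j i. cmod (dB $ j $ i) < \<eta> / 2) \<longrightarrow>
        gobj \<nu> A y P \<eta> C (W, B, x) \<le> gobj \<nu> A y P \<eta> C (W, B + dB, x + dx)"
  shows "critical_point (gobj \<nu> A y P \<eta> C) (W, B, x)"
proof -
  obtain K where K0: "K \<ge> 0" and Kb: "\<And>W' B' x'. unitary_mat W' \<Longrightarrow> norm x' \<le> C \<Longrightarrow> norm (B' - B) < \<eta> / 2 \<Longrightarrow>
      Qf \<nu> A y P W B x + \<eta>\<^sup>2 * L0 B - 2 * K * (norm (W' - W) * (norm (x' - x) + norm (B' - B)))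
        \<le> Qf \<nu> A y P W' B' x' + \<eta>\<^sup>2 * L0 B'"
    using crit_bound[OF eta nu W x Wmin LP] by blast
  let ?G = "gobj \<nu> A y P \<eta> C"
  let ?z = "(W, B, x)"
  define gz where "gz = Qf \<nu> A y P W B x + \<eta>\<^sup>2 * L0 B"
  have Gz: "?G ?z = ereal gz" using W x by (simp add: gobj_eq gz_def)
  let ?R = "\<lambda>u. (?G u - ?G ?z - ereal (inner 0 (u - ?z))) / ereal (norm (u - ?z))"
  have ev: "eventually (\<lambda>u. - ereal e \<le> ?R u) (at ?z)" if e: "e > 0" for e
  proof -
    define \<delta> where "\<delta> = min (\<eta> / 2) (e / (4 * K + 1))"
    have d0: "\<delta> > 0" using eta e K0 by (simp add: \<delta>_def)
    show ?thesis unfolding eventually_at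
    proof (intro exI[of _ \<delta>] conjI d0 ballI impI)
      fix u :: "(complex^'n^'n) \<times> (complex^'n^'N) \<times> (complex^'p)"
      assume "u \<in> UNIV" and h: "u \<noteq> ?z \<and> dist u ?z < \<delta>"
      obtain W' B' x' where u: "u = (W', B', x')" by (metis prod_cases3)
      define n where "n = norm (u - ?z)"
      have n0: "n > 0" using h by (simp add: n_def)
      have nd: "n < \<delta>" using h by (simp add: n_def dist_norm)
      have uz: "u - ?z = (W' - W, B' - B, x' - x)" by (simp add: u)
      have nW: "norm (W' - W) \<le> n" unfolding n_def uz by (rule norm_fst_le)
      have p1: "norm (B' - B, x' - x) \<le> norm (W' - W, B' - B, x' - x)" by (rule norm_snd_le)
      have nB: "norm (B' - B) \<le> n" unfolding n_def uz
        using norm_fst_le[of "B' - B" "x' - x"] p1 by linarith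
      have nx: "norm (x' - x) \<le> n" unfolding n_def uz
        using norm_snd_le[of "x' - x" "B' - B"] p1 by linarith
      show "- ereal e \<le> ?R u"
      proof (cases "unitary_mat W' \<and> norm x' \<le> C")
        case False
        hence "?G u = \<infinity>" by (simp add: u gobj_eq)
        thus ?thesis using n0 Gz by (simp add: n_def)
      next
        case True
        define gu where "gu = Qf \<nu> A y P W' B' x' + \<eta>\<^sup>2 * L0 B'"
        have Gu: "?G u = ereal gu" using True by (simp add: u gobj_eq gu_def)
        have "norm (B' - B) < \<eta> / 2" using nB nd by (simp add: \<delta>_def)
        hence "gz - 2 * K * (norm (W' - W) * (norm (x' - x) + norm (B' - B))) \<le> gu"
          using Kb True unfolding gz_def gu_def by blast
        moreover have "2 * K * (norm (W' - W) * (norm (x' - x) + norm (B' - B))) \<le> 2 * K * (n * (n + n))"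
          using K0 nW nB nx n0 by (intro mult_left_mono mult_mono add_mono) auto
        ultimately have g: "gz - 4 * K * n * n \<le> gu" by (simp add: algebra_simps)
        have "4 * K * n \<le> 4 * K * (e / (4 * K + 1))"
          using nd K0 by (intro mult_left_mono) (auto simp: \<delta>_def)
        also have "\<dots> \<le> e" using e K0 by (simp add: field_simps)
        finally have "- e \<le> - 4 * K * n" by simp
        also have "- 4 * K * n \<le> (gu - gz) / n" using g n0 by (simp add: field_simps)
        finally have "- e \<le> (gu - gz) / n" .
        thus ?thesis using Gu Gz n0 by (simp add: n_def)
      qed
    qed
  qed
  have "0 \<le> Liminf (at ?z) ?R"
  proof (rule ereal_le_epsilon2)
    fix e :: real assume "0 < e"
    hence "- ereal e \<le> Liminf (at ?z) ?R" by (rule Liminf_bounded[OF ev])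
    thus "0 \<le> Liminf (at ?z) ?R + ereal e" by (rule ereal_eps_aux)
  qed
  hence fs: "0 \<in> frechet_subdiff ?G ?z" unfolding frechet_subdiff_def using Gz by simp
  show ?thesis unfolding critical_point_def limiting_subdiff_def
    using Gz fs by (intro CollectI conjI exI[of _ "\<lambda>_. ?z"] exI[of _ "\<lambda>_. 0"]) auto
qed



lemma good_from:
  fixes W :: "complex^'n^'n" and B :: "complex^'n^'N::finite" and x :: "complex^'p"
  assumes eta: "\<eta> > 0" and nu: "\<nu> \<ge> 0" and W: "unitary_mat W" and x: "norm x \<le> C"
    and xmin: "\<forall>x'. norm x' \<le> C \<longrightarrow> Qf \<nu> A y P W B x \<le> Qf \<nu> A y P W B x'"
    and Wmin: "\<forall>W'. unitary_mat W' \<longrightarrow> Qf \<nu> A y P W B x \<le> Qf \<nu> A y P W' B x"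
    and comp: "\<forall>j. compat \<eta> (W *v (P j *v x)) (B $ j)"
  shows "good_point \<nu> A y P \<eta> C (W, B, x)"
proof -
  have LP: "\<forall>dB dx. (\<forall>j i. cmod (dB $ j $ i) < \<eta> / 2) \<longrightarrow>
        gobj \<nu> A y P \<eta> C (W, B, x) \<le> gobj \<nu> A y P \<eta> C (W, B + dB, x + dx)"
    using local_opt[OF eta nu W x xmin comp] by blast
  have c: "critical_point (gobj \<nu> A y P \<eta> C) (W, B, x)" by (rule crit[OF eta nu W x Wmin LP])
  have xm: "gobj \<nu> A y P \<eta> C (W, B, x) \<le> gobj \<nu> A y P \<eta> C (W, B, x')" for x'
    using xmin W x by (auto simp: gobj_eq)
  have Wm: "gobj \<nu> A y P \<eta> C (W, B, x) \<le> gobj \<nu> A y P \<eta> C (W', B, x)" for W'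
    using Wmin W x by (auto simp: gobj_eq)
  have Bm: "gobj \<nu> A y P \<eta> C (W, B, x) \<le> gobj \<nu> A y P \<eta> C (W, B', x)" for B'
  proof -
    have "(\<Sum>j\<in>UNIV. (norm (W *v (P j *v x) - B $ j))\<^sup>2 + \<eta>\<^sup>2 * real (l0 (B $ j)))
       \<le> (\<Sum>j\<in>UNIV. (norm (W *v (P j *v x) - B' $ j))\<^sup>2 + \<eta>\<^sup>2 * real (l0 (B' $ j)))"
      by (rule sum_mono, rule compat_min[OF eta]) (use comp in auto)
    thus ?thesis using W x
      by (simp add: gobj_eq Qf_def L0_def sum.distrib sum_distrib_left add.assoc)
  qed
  show ?thesis unfolding good_point_def using c xm Wm Bm LP by auto
qed

lemma tendsto_mv:
  assumes "((\<lambda>k. M k) \<longlongrightarrow> (M0::complex^'c^'r)) F" "((\<lambda>k. v k) \<longlongrightarrow> (v0::complex^'c)) F"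
  shows "((\<lambda>k. M k *v v k) \<longlongrightarrow> M0 *v v0) F"
  unfolding matrix_vector_mult_def
  by (intro tendsto_vec_lambda tendsto_sum tendsto_mult tendsto_vec_nth assms)

lemma tendsto_mm:
  assumes "((\<lambda>k. M k) \<longlongrightarrow> (M0::complex^'c^'r)) F" "((\<lambda>k. N k) \<longlongrightarrow> (N0::complex^'d^'c)) F"
  shows "((\<lambda>k. M k ** N k) \<longlongrightarrow> M0 ** N0) F"
  unfolding matrix_matrix_mult_def
  by (intro tendsto_vec_lambda tendsto_sum tendsto_mult tendsto_vec_nth assms)

lemma tendsto_ctrans:
  assumes "((\<lambda>k. M k) \<longlongrightarrow> (M0::complex^'c^'r)) F"
  shows "((\<lambda>k. ctrans (M k)) \<longlongrightarrow> ctrans M0) F"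
  unfolding ctrans_def
  by (intro tendsto_vec_lambda tendsto_cnj tendsto_vec_nth assms)

lemma unitary_limit:
  assumes "(W \<longlongrightarrow> W0) sequentially" "\<forall>k. unitary_mat (W k)"
  shows "unitary_mat W0"
proof -
  have "((\<lambda>k. ctrans (W k) ** W k) \<longlongrightarrow> ctrans W0 ** W0) sequentially"
    by (intro tendsto_mm tendsto_ctrans assms(1))
  moreover have "(\<lambda>k. ctrans (W k) ** W k) = (\<lambda>k. mat 1)" using assms(2) by (simp add: unitary_mat_def)
  ultimately have "((\<lambda>k. mat 1) \<longlongrightarrow> ctrans W0 ** W0) sequentially" by simp
  hence "ctrans W0 ** W0 = mat 1" using LIMSEQ_unique tendsto_const by blast
  thus ?thesis by (simp add: unitary_mat_def)
qed

lemma tendsto_Qf: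
  assumes "(W \<longlongrightarrow> W0) F" "(B \<longlongrightarrow> B0) F" "(x \<longlongrightarrow> x0) F"
  shows "((\<lambda>k. Qf \<nu> A y P (W k) (B k) (x k)) \<longlongrightarrow> Qf \<nu> A y P W0 B0 x0) F"
  unfolding Qf_def
  by (intro tendsto_intros tendsto_mv assms tendsto_const tendsto_vec_nth)

lemma coord_limit:
  fixes a b :: "nat \<Rightarrow> complex"
  assumes a: "a \<longlonglongrightarrow> a0" and b: "b \<longlonglongrightarrow> b0" and eta: "\<eta> > 0"
    and h: "\<forall>k. b k = (if cmod (a k) < \<eta> then 0 else a k)"
  shows "(b0 = 0 \<and> cmod a0 \<le> \<eta>) \<or> (b0 = a0 \<and> \<eta> \<le> cmod a0)"
proof (cases "b0 = 0")
  case True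
  show ?thesis
  proof (rule ccontr)
    assume "\<not> ?thesis"
    hence gt: "cmod a0 > \<eta>" using True by auto
    have "eventually (\<lambda>k. cmod (a k) > \<eta>) sequentially"
      using tendsto_norm[OF a] gt by (rule order_tendstoD(1))
    hence "eventually (\<lambda>k. a k = b k) sequentially" by eventually_elim (use h in auto)
    hence "b \<longlonglongrightarrow> a0" by (rule Lim_transform_eventually[OF a])
    hence "b0 = a0" using b LIMSEQ_unique by blast
    thus False using True gt eta by simp
  qed
next
  case False
  have "eventually (\<lambda>k. b k \<noteq> 0) sequentially"
    using b False by (rule tendsto_imp_eventually_ne)
  hence ev: "eventually (\<lambda>k. b k = a k \<and> \<eta> \<le> cmod (a k)) sequentially"
    by eventually_elim (use h in \<open>auto split: if_splits\<close>)
  hence "eventually (\<lambda>k. b k = a k) sequentially" by eventually_elim auto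
  hence "a \<longlonglongrightarrow> b0" by (rule Lim_transform_eventually[OF b])
  hence "b0 = a0" using a LIMSEQ_unique by blast
  moreover have "\<eta> \<le> cmod a0"
    using ev by (intro tendsto_lowerbound[OF tendsto_norm[OF a]]) (auto elim: eventually_mono)
  ultimately show ?thesis by simp
qed

lemma compat_limit:
  fixes a b :: "nat \<Rightarrow> complex^'n"
  assumes a: "a \<longlonglongrightarrow> a0" and b: "b \<longlonglongrightarrow> b0" and eta: "\<eta> > 0"
    and h: "\<forall>k. b k = hthr \<eta> (a k)"
  shows "compat \<eta> a0 b0"
  unfolding compat_def
proof
  fix i
  show "(b0 $ i = 0 \<and> cmod (a0 $ i) \<le> \<eta>) \<or> (b0 $ i = a0 $ i \<and> \<eta> \<le> cmod (a0 $ i))"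
  proof (rule coord_limit[of "\<lambda>k. a k $ i" _ "\<lambda>k. b k $ i"])
    show "(\<lambda>k. a k $ i) \<longlonglongrightarrow> a0 $ i" using a by (rule tendsto_vec_nth)
    show "(\<lambda>k. b k $ i) \<longlonglongrightarrow> b0 $ i" using b by (rule tendsto_vec_nth)
    show "\<eta> > 0" by (rule eta)
    show "\<forall>k. b k $ i = (if cmod (a k $ i) < \<eta> then 0 else a k $ i)" using h by (simp add: hthr_def)
  qed
qed

lemma l0_eventually:
  fixes b :: "nat \<Rightarrow> complex^'n"
  assumes b: "b \<longlonglongrightarrow> b0" and eta: "\<eta> > 0"
    and h: "\<forall>k i. b k $ i = 0 \<or> \<eta> \<le> cmod (b k $ i)"
  shows "eventually (\<lambda>k. l0 (b k) = l0 b0) sequentially"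
proof -
  have "eventually (\<lambda>k. (b k $ i \<noteq> 0) = (b0 $ i \<noteq> 0)) sequentially" for i
  proof (cases "b0 $ i = 0")
    case True
    have "((\<lambda>k. b k $ i) \<longlongrightarrow> b0 $ i) sequentially" using b by (rule tendsto_vec_nth)
    hence "eventually (\<lambda>k. cmod (b k $ i) < \<eta>) sequentially"
      using True eta by (intro order_tendstoD(2)[OF tendsto_norm]) auto
    thus ?thesis by eventually_elim (use h True in \<open>metis not_le\<close>)
  next
    case False
    have "((\<lambda>k. b k $ i) \<longlongrightarrow> b0 $ i) sequentially" using b by (rule tendsto_vec_nth)
    hence "eventually (\<lambda>k. b k $ i \<noteq> 0) sequentially" using False by (rule tendsto_imp_eventually_ne)
    thus ?thesis by eventually_elim (use False in auto)
  qed
  hence "eventually (\<lambda>k. \<forall>i. (b k $ i \<noteq> 0) = (b0 $ i \<noteq> 0)) sequentially"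
    by (rule eventually_all_finite)
  thus ?thesis by eventually_elim (simp add: l0_def)
qed

lemma L0_eventually:
  fixes B :: "nat \<Rightarrow> complex^'n^'N::finite"
  assumes b: "B \<longlonglongrightarrow> B0" and eta: "\<eta> > 0"
    and h: "\<forall>k j i. B k $ j $ i = 0 \<or> \<eta> \<le> cmod (B k $ j $ i)"
  shows "eventually (\<lambda>k. L0 (B k) = L0 B0) sequentially"
proof -
  have "eventually (\<lambda>k. l0 (B k $ j) = l0 (B0 $ j)) sequentially" for j
    by (rule l0_eventually[OF tendsto_vec_nth[OF b] eta]) (use h in auto)
  hence "eventually (\<lambda>k. \<forall>j. l0 (B k $ j) = l0 (B0 $ j)) sequentially"
    by (rule eventually_all_finite)
  thus ?thesis by eventually_elim (simp add: L0_def)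
qed




lemma hthr_entries: "hthr \<eta> a $ i = 0 \<or> \<eta> \<le> cmod (hthr \<eta> a $ i)"
  by (simp add: hthr_def)

lemma hthr_norm: "norm (hthr \<eta> a) \<le> norm a"
  by (rule norm_le_componentwise_cart) (simp add: hthr_def)

lemma norm_le_sum_vec2: "norm (v::'a::real_normed_vector^'n) \<le> (\<Sum>i\<in>UNIV. norm (v $ i))"
  by (simp add: norm_vec_def L2_set_le_sum)

lemma Qf_nonneg: "\<nu> \<ge> 0 \<Longrightarrow> 0 \<le> Qf \<nu> A y P W B x"
  by (simp add: Qf_def sum_nonneg)

lemma L0_nonneg: "0 \<le> L0 B"
  by (simp add: L0_def sum_nonneg)

lemma subseq_lim: "X \<longlonglongrightarrow> L \<Longrightarrow> strict_mono r \<Longrightarrow> (\<lambda>k. X (r k)) \<longlonglongrightarrow> L"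
  using LIMSEQ_subseq_LIMSEQ[of X L r] by (simp add: o_def)

theorem corollary1:
  fixes A :: "complex^'p^'m" and y :: "complex^'m"
    and P :: "'N::finite \<Rightarrow> complex^'p^'n"
    and \<nu> \<eta> C :: real
    and Wt :: "nat \<Rightarrow> complex^'n^'n" and Bt :: "nat \<Rightarrow> complex^'n^'N" and xt :: "nat \<Rightarrow> complex^'p"
  assumes "\<forall>j i k. P j $ i $ k \<in> {0, 1}"
    and "\<nu> > 0" and "\<eta> > 0" and "C > 0"
    and "A1_iterates \<nu> A y P \<eta> C Wt Bt xt"
  shows "\<exists>c. {z. good_point \<nu> A y P \<eta> C z \<and> gobj \<nu> A y P \<eta> C z = c} \<noteq> {} \<and>
             (\<lambda>t. infdist (Wt t, Bt t, xt t)
                     {z. good_point \<nu> A y P \<eta> C z \<and> gobj \<nu> A y P \<eta> C z = c}) \<longlonglongrightarrow> 0"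
proof -
  note A1 = assms(5)[unfolded A1_iterates_def]
  have nu: "\<nu> \<ge> 0" using assms(2) by simp
  have eta: "\<eta> > 0" by (rule assms(3))
  note A1t = A1[rule_format]
  have F1: "unitary_mat (Wt t)" if t1: "t \<ge> 1" for t
  proof -
    obtain U V \<sigma> where "unitary_mat U" "unitary_mat V" "Wt t = V ** ctrans U"
      using A1t[OF t1, THEN conjunct1] by (elim exE conjE)
    thus ?thesis using unitary_VUh by simp
  qed
  have F2: "Qf \<nu> A y P (Wt t) (Bt (t - 1)) (xt (t - 1)) \<le> Qf \<nu> A y P W' (Bt (t - 1)) (xt (t - 1))"
    if t1: "t \<ge> 1" and W': "unitary_mat W'" for t W'
  proof -
    obtain U V \<sigma> where UV: "unitary_mat U" "unitary_mat V" "\<forall>i. \<sigma> i \<ge> 0"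
      "(\<chi> i k. \<Sum>j\<in>UNIV. (P j *v xt (t - 1)) $ i * cnj (Bt (t - 1) $ j $ k)) = U ** diag_mat \<sigma> ** ctrans V"
      "Wt t = V ** ctrans U"
      using A1t[OF t1, THEN conjunct1] by (elim exE conjE)
    show ?thesis using Wstep[OF UV(4) UV(1) UV(2) UV(3) W'] UV(5) by simp
  qed
  have F3: "Bt t $ j = hthr \<eta> (Wt t *v (P j *v xt (t - 1)))" if "t \<ge> 1" for t j
    using A1t[OF that, THEN conjunct2, THEN conjunct1] by simp
  have F4: "norm (xt t) \<le> C" if "t \<ge> 1" for t
    using A1t[OF that, THEN conjunct2, THEN conjunct2, THEN conjunct1] .
  have F5: "\<forall>x'. norm x' \<le> C \<longrightarrow> Qf \<nu> A y P (Wt t) (Bt t) (xt t) \<le> Qf \<nu> A y P (Wt t) (Bt t) x'"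
    if "t \<ge> 1" for t
    using A1t[OF that, THEN conjunct2, THEN conjunct2, THEN conjunct2] unfolding Qf_def .
  define v where "v t = Qf \<nu> A y P (Wt t) (Bt t) (xt t) + \<eta>\<^sup>2 * L0 (Bt t)" for t
  define w where "w t = Qf \<nu> A y P (Wt t) (Bt (t - 1)) (xt (t - 1)) + \<eta>\<^sup>2 * L0 (Bt (t - 1))" for t
  define S where "S t = (\<Sum>j\<in>UNIV. (norm (P j *v (xt t - xt (Suc t))))\<^sup>2)" for t
  have S0: "0 \<le> S t" for t by (simp add: S_def sum_nonneg)
  have chain: "v (Suc t) + S t \<le> w (Suc t) \<and> w (Suc t) \<le> v t" if t: "t \<ge> 1" for t
  proof -
    have a: "Qf \<nu> A y P (Wt (Suc t)) (Bt (Suc t)) (xt (Suc t)) + S t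
       \<le> Qf \<nu> A y P (Wt (Suc t)) (Bt (Suc t)) (xt t)"
      using Qf_xstep[OF F1 F4 F4 F5 nu, of "Suc t" t] t by (simp add: S_def)
    have b: "Qf \<nu> A y P (Wt (Suc t)) (Bt (Suc t)) (xt t) + \<eta>\<^sup>2 * L0 (Bt (Suc t))
       \<le> Qf \<nu> A y P (Wt (Suc t)) (Bt t) (xt t) + \<eta>\<^sup>2 * L0 (Bt t)"
    proof -
      have "(\<Sum>j\<in>UNIV. (norm (Wt (Suc t) *v (P j *v xt t) - Bt (Suc t) $ j))\<^sup>2 + \<eta>\<^sup>2 * real (l0 (Bt (Suc t) $ j)))
         \<le> (\<Sum>j\<in>UNIV. (norm (Wt (Suc t) *v (P j *v xt t) - Bt t $ j))\<^sup>2 + \<eta>\<^sup>2 * real (l0 (Bt t $ j)))"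
        by (rule sum_mono, rule compat_min[OF eta]) (use F3[of "Suc t"] hthr_compat in simp)
      thus ?thesis by (simp add: Qf_def L0_def sum.distrib sum_distrib_left add.assoc)
    qed
    have c: "Qf \<nu> A y P (Wt (Suc t)) (Bt t) (xt t) \<le> Qf \<nu> A y P (Wt t) (Bt t) (xt t)"
      using F2[of "Suc t" "Wt t"] F1[OF t] by simp
    show ?thesis using a b c by (simp add: v_def w_def)
  qed
  have v0: "0 \<le> v t" for t
    using Qf_nonneg[OF nu, of A y P "Wt t" "Bt t" "xt t"] L0_nonneg[of "Bt t"] unfolding v_def by simp
  have dec: "decseq (\<lambda>k. v (Suc k))"
    unfolding decseq_Suc_iff
  proof
    fix n
    have "v (Suc (Suc n)) + S (Suc n) \<le> w (Suc (Suc n)) \<and> w (Suc (Suc n)) \<le> v (Suc n)" by (rule chain) simp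
    thus "v (Suc (Suc n)) \<le> v (Suc n)" using S0[of "Suc n"] by linarith
  qed
  have "\<forall>i. 0 \<le> v (Suc i)" using v0 by simp
  then obtain c where vc: "(\<lambda>k. v (Suc k)) \<longlonglongrightarrow> c"
    by (rule decseq_convergent[OF dec])
  have vlim: "v \<longlonglongrightarrow> c" using LIMSEQ_offset[of v 1] vc by simp
  have Slim: "(\<lambda>k. S (Suc k)) \<longlonglongrightarrow> 0"
  proof (rule real_tendsto_sandwich)
    show "eventually (\<lambda>k. 0 \<le> S (Suc k)) sequentially" using S0 by simp
    show "eventually (\<lambda>k. S (Suc k) \<le> v (Suc k) - v (Suc (Suc k))) sequentially"
    proof (intro always_eventually allI)
      fix k
      have "v (Suc (Suc k)) + S (Suc k) \<le> w (Suc (Suc k)) \<and> w (Suc (Suc k)) \<le> v (Suc k)" by (rule chain) simp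
      thus "S (Suc k) \<le> v (Suc k) - v (Suc (Suc k))" by linarith
    qed
    show "(\<lambda>k. 0) \<longlonglongrightarrow> (0::real)" by simp
    have "(\<lambda>k. v (Suc k) - v (Suc (Suc k))) \<longlonglongrightarrow> c - c"
      by (intro tendsto_diff vc) (rule LIMSEQ_Suc[OF vc])
    thus "(\<lambda>k. v (Suc k) - v (Suc (Suc k))) \<longlonglongrightarrow> 0" by simp
  qed
  have dlim: "(\<lambda>t. P j *v (xt t - xt (t - 1))) \<longlonglongrightarrow> 0" for j
  proof -
    have b: "norm (P j *v (xt (k + 2) - xt (k + 2 - 1))) \<le> sqrt (S (Suc k))" for k
    proof -
      have "(norm (P j *v (xt (Suc k) - xt (Suc (Suc k)))))\<^sup>2 \<le> S (Suc k)"
        unfolding S_def by (rule member_le_sum) auto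
      hence "norm (P j *v (xt (Suc k) - xt (Suc (Suc k)))) \<le> sqrt (S (Suc k))"
        by (simp add: real_le_rsqrt)
      moreover have "P j *v (xt (k + 2) - xt (k + 2 - 1)) = - (P j *v (xt (Suc k) - xt (Suc (Suc k))))"
        by (simp add: matrix_vector_mult_diff_distrib)
      ultimately show ?thesis by (simp only: norm_minus_cancel)
    qed
    have "(\<lambda>k. norm (P j *v (xt (k + 2) - xt (k + 2 - 1)))) \<longlonglongrightarrow> 0"
    proof (rule real_tendsto_sandwich)
      show "eventually (\<lambda>k. 0 \<le> norm (P j *v (xt (k + 2) - xt (k + 2 - 1)))) sequentially" by simp
      show "eventually (\<lambda>k. norm (P j *v (xt (k + 2) - xt (k + 2 - 1))) \<le> sqrt (S (Suc k))) sequentially"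
        using b by simp
      show "(\<lambda>k. 0) \<longlonglongrightarrow> (0::real)" by simp
      show "(\<lambda>k. sqrt (S (Suc k))) \<longlonglongrightarrow> 0" using tendsto_real_sqrt[OF Slim] by simp
    qed
    hence "(\<lambda>t. norm (P j *v (xt t - xt (t - 1)))) \<longlonglongrightarrow> 0" by (rule LIMSEQ_offset)
    thus ?thesis by (simp add: tendsto_norm_zero_iff)
  qed
  have wlim: "w \<longlonglongrightarrow> c"
  proof -
    have "(\<lambda>k. w (k + 2)) \<longlonglongrightarrow> c"
    proof (rule real_tendsto_sandwich)
      have ch: "v (Suc (Suc k)) + S (Suc k) \<le> w (Suc (Suc k)) \<and> w (Suc (Suc k)) \<le> v (Suc k)" for k
        by (rule chain) simp
      show "eventually (\<lambda>k. v (k + 2) \<le> w (k + 2)) sequentially"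
      proof (intro always_eventually allI)
        fix k
        have "v (Suc (Suc k)) \<le> w (Suc (Suc k))" using ch[of k] S0[of "Suc k"] by linarith
        thus "v (k + 2) \<le> w (k + 2)" by (simp add: numeral_2_eq_2)
      qed
      show "eventually (\<lambda>k. w (k + 2) \<le> v (Suc k)) sequentially"
        using ch by (intro always_eventually allI) (simp add: numeral_2_eq_2)
      show "(\<lambda>k. v (k + 2)) \<longlonglongrightarrow> c" using LIMSEQ_Suc[OF vc] by (simp add: numeral_2_eq_2)
      show "(\<lambda>k. v (Suc k)) \<longlonglongrightarrow> c" by (rule vc)
    qed
    thus ?thesis by (rule LIMSEQ_offset)
  qed
  let ?G = "gobj \<nu> A y P \<eta> C"
  let ?z = "\<lambda>t. (Wt t, Bt t, xt t)"
  let ?S = "{z. good_point \<nu> A y P \<eta> C z \<and> ?G z = ereal c}"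
  have hent: "Bt t $ j $ i = 0 \<or> \<eta> \<le> cmod (Bt t $ j $ i)" if "t \<ge> 1" for t j i
    using F3[OF that, of j] hthr_entries by metis
  have acc: "zs \<in> ?S"
    if r: "strict_mono r" and r2: "\<forall>k. 2 \<le> r k" and lim: "(\<lambda>k. ?z (r k)) \<longlonglongrightarrow> zs" for r zs
  proof -
    obtain W0 B0 x0 where zs: "zs = (W0, B0, x0)" by (cases zs) auto
    have lW: "(\<lambda>k. Wt (r k)) \<longlonglongrightarrow> W0" using tendsto_fst[OF lim] zs by simp
    have lB: "(\<lambda>k. Bt (r k)) \<longlonglongrightarrow> B0" using tendsto_fst[OF tendsto_snd[OF lim]] zs by simp
    have lx: "(\<lambda>k. xt (r k)) \<longlonglongrightarrow> x0" using tendsto_snd[OF tendsto_snd[OF lim]] zs by simp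
    have r1: "1 \<le> r k" for k using r2[rule_format, of k] by simp
    have W0u: "unitary_mat W0" by (rule unitary_limit[OF lW]) (use F1 r1 in auto)
    have x0C: "norm x0 \<le> C"
      by (rule LIMSEQ_le_const2[OF tendsto_norm[OF lx]]) (use F4 r1 in auto)
    have Pxm: "(\<lambda>k. P j *v xt (r k - 1)) \<longlonglongrightarrow> P j *v x0" for j
    proof -
      have d: "(\<lambda>k. P j *v (xt (r k) - xt (r k - 1))) \<longlonglongrightarrow> 0" using subseq_lim[OF dlim r] .
      have "(\<lambda>k. P j *v xt (r k) - P j *v (xt (r k) - xt (r k - 1))) \<longlonglongrightarrow> P j *v x0 - 0"
        by (intro tendsto_diff tendsto_mv tendsto_const lx d)
      thus ?thesis by (simp add: matrix_vector_mult_diff_distrib)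
    qed
    have comp: "\<forall>j. compat \<eta> (W0 *v (P j *v x0)) (B0 $ j)"
    proof
      fix j
      show "compat \<eta> (W0 *v (P j *v x0)) (B0 $ j)"
      proof (rule compat_limit[of "\<lambda>k. Wt (r k) *v (P j *v xt (r k - 1))" _ "\<lambda>k. Bt (r k) $ j"])
        show "(\<lambda>k. Wt (r k) *v (P j *v xt (r k - 1))) \<longlonglongrightarrow> W0 *v (P j *v x0)"
          by (intro tendsto_mv lW Pxm)
        show "(\<lambda>k. Bt (r k) $ j) \<longlonglongrightarrow> B0 $ j" using lB by (rule tendsto_vec_nth)
        show "\<eta> > 0" by (rule eta)
        show "\<forall>k. Bt (r k) $ j = hthr \<eta> (Wt (r k) *v (P j *v xt (r k - 1)))" using F3 r1 by simp
      qed
    qed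
    have evL: "eventually (\<lambda>k. L0 (Bt (r k)) = L0 B0) sequentially"
      by (rule L0_eventually[OF lB eta]) (use hent r1 in auto)
    define q0 where "q0 = Qf \<nu> A y P W0 B0 x0 + \<eta>\<^sup>2 * L0 B0"
    have "(\<lambda>k. Qf \<nu> A y P (Wt (r k)) (Bt (r k)) (xt (r k)) + \<eta>\<^sup>2 * L0 B0) \<longlonglongrightarrow> q0"
      unfolding q0_def by (intro tendsto_add tendsto_Qf lW lB lx tendsto_const)
    moreover have "eventually (\<lambda>k. Qf \<nu> A y P (Wt (r k)) (Bt (r k)) (xt (r k)) + \<eta>\<^sup>2 * L0 B0 = v (r k)) sequentially"
      using evL by eventually_elim (simp add: v_def)
    ultimately have "(\<lambda>k. v (r k)) \<longlonglongrightarrow> q0" by (rule Lim_transform_eventually)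
    moreover have "(\<lambda>k. v (r k)) \<longlonglongrightarrow> c" using subseq_lim[OF vlim r] .
    ultimately have q0c: "q0 = c" using LIMSEQ_unique by blast
    have Gzs: "?G zs = ereal c" using W0u x0C zs q0c by (simp add: gobj_eq q0_def)
    have xmin: "\<forall>x'. norm x' \<le> C \<longrightarrow> Qf \<nu> A y P W0 B0 x0 \<le> Qf \<nu> A y P W0 B0 x'"
    proof (intro allI impI)
      fix x' :: "complex^'p" assume x': "norm x' \<le> C"
      show "Qf \<nu> A y P W0 B0 x0 \<le> Qf \<nu> A y P W0 B0 x'"
        by (rule LIMSEQ_le[OF tendsto_Qf[OF lW lB lx] tendsto_Qf[OF lW lB tendsto_const]])
           (use F5 r1 x' in auto)
    qed
    have Wmin: "\<forall>W'. unitary_mat W' \<longrightarrow> Qf \<nu> A y P W0 B0 x0 \<le> Qf \<nu> A y P W' B0 x0"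
    proof -
      have bnd: "bounded (range (\<lambda>k. Wt (r k + 1)))"
        unfolding Elementary_Metric_Spaces.bounded_iff
      proof (intro exI[of _ "sqrt (real CARD('n))"] ballI)
        fix W assume "W \<in> range (\<lambda>k. Wt (r k + 1))"
        then obtain k where "W = Wt (r k + 1)" by blast
        thus "norm W \<le> sqrt (real CARD('n))" using unitary_norm_mat[OF F1[of "r k + 1"]] by simp
      qed
      obtain W1 s where s: "strict_mono s" and lW1': "((\<lambda>k. Wt (r k + 1)) \<circ> s) \<longlonglongrightarrow> W1"
        using bounded_imp_convergent_subsequence[OF bnd] by blast
      have lW1: "(\<lambda>k. Wt (r (s k) + 1)) \<longlonglongrightarrow> W1" using lW1' by (simp add: o_def)
      have lB1: "(\<lambda>k. Bt (r (s k))) \<longlonglongrightarrow> B0" using subseq_lim[OF lB s] .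
      have lx1: "(\<lambda>k. xt (r (s k))) \<longlonglongrightarrow> x0" using subseq_lim[OF lx s] .
      have W1min: "Qf \<nu> A y P W1 B0 x0 \<le> Qf \<nu> A y P W' B0 x0" if W': "unitary_mat W'" for W'
        by (rule LIMSEQ_le[OF tendsto_Qf[OF lW1 lB1 lx1] tendsto_Qf[OF tendsto_const lB1 lx1]])
           (use F2[OF _ W', of "r (s _) + 1"] in auto)
      have rs: "strict_mono (\<lambda>k. r (s k) + 1)"
        using strict_mono_o[OF r s] by (simp add: strict_mono_def o_def)
      have wc: "(\<lambda>k. w (r (s k) + 1)) \<longlonglongrightarrow> c" using subseq_lim[OF wlim rs] .
      have evL1: "eventually (\<lambda>k. L0 (Bt (r (s k))) = L0 B0) sequentially"
        by (rule L0_eventually[OF lB1 eta]) (use hent r1 in auto)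
      have "(\<lambda>k. Qf \<nu> A y P (Wt (r (s k) + 1)) (Bt (r (s k))) (xt (r (s k))) + \<eta>\<^sup>2 * L0 B0)
          \<longlonglongrightarrow> Qf \<nu> A y P W1 B0 x0 + \<eta>\<^sup>2 * L0 B0"
        by (intro tendsto_add tendsto_Qf lW1 lB1 lx1 tendsto_const)
      moreover have "eventually (\<lambda>k. Qf \<nu> A y P (Wt (r (s k) + 1)) (Bt (r (s k))) (xt (r (s k))) + \<eta>\<^sup>2 * L0 B0
           = w (r (s k) + 1)) sequentially"
        using evL1 by eventually_elim (simp add: w_def)
      ultimately have "(\<lambda>k. w (r (s k) + 1)) \<longlonglongrightarrow> Qf \<nu> A y P W1 B0 x0 + \<eta>\<^sup>2 * L0 B0"
        by (rule Lim_transform_eventually)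
      hence "Qf \<nu> A y P W1 B0 x0 + \<eta>\<^sup>2 * L0 B0 = c" using wc LIMSEQ_unique by blast
      hence eqW: "Qf \<nu> A y P W1 B0 x0 = Qf \<nu> A y P W0 B0 x0" using q0c by (simp add: q0_def)
      show ?thesis using W1min eqW by simp
    qed
    have "good_point \<nu> A y P \<eta> C (W0, B0, x0)" by (rule good_from[OF eta nu W0u x0C xmin Wmin comp])
    thus ?thesis using Gzs zs by simp
  qed
  define KB where "KB = (\<Sum>j\<in>UNIV. real CARD('n) * real CARD('p) * norm (P j) * C)"
  have zb: "norm (?z t) \<le> sqrt (real CARD('n)) + KB + C" if t2: "t \<ge> 2" for t
  proof -
    have t1: "t \<ge> 1" "t - 1 \<ge> 1" using t2 by auto
    have "norm (Bt t) \<le> (\<Sum>j\<in>UNIV. norm (Bt t $ j))" by (rule norm_le_sum_vec2)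
    also have "\<dots> \<le> KB" unfolding KB_def
    proof (rule sum_mono)
      fix j
      have "norm (Bt t $ j) \<le> norm (Wt t *v (P j *v xt (t - 1)))"
        unfolding F3[OF t1(1)] by (rule hthr_norm)
      also have "\<dots> = norm (P j *v xt (t - 1))" by (rule unitary_norm[OF F1[OF t1(1)]])
      also have "\<dots> \<le> real CARD('n) * real CARD('p) * norm (P j) * norm (xt (t - 1))" by (rule mv_bound)
      also have "\<dots> \<le> real CARD('n) * real CARD('p) * norm (P j) * C"
        by (rule mult_left_mono[OF F4[OF t1(2)]]) simp
      finally show "norm (Bt t $ j) \<le> real CARD('n) * real CARD('p) * norm (P j) * C" .
    qed
    finally have nB: "norm (Bt t) \<le> KB" .
    have "norm (?z t) \<le> norm (Wt t) + norm (Bt t, xt t)" by (rule norm_Pair_le)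
    also have "\<dots> \<le> norm (Wt t) + (norm (Bt t) + norm (xt t))" using norm_Pair_le by simp
    finally show ?thesis using nB F4[OF t1(1)] unitary_norm_mat[OF F1[OF t1(1)]] by simp
  qed
  have bnd: "bounded (range (\<lambda>k. ?z (r k)))" if "\<forall>k. 2 \<le> r k" for r
    unfolding Elementary_Metric_Spaces.bounded_iff using zb that by blast
  have ne: "?S \<noteq> {}"
  proof -
    have "bounded (range (\<lambda>k. ?z (k + 2)))" by (rule bnd) simp
    then obtain l s where s: "strict_mono s" and ls: "((\<lambda>k. ?z (k + 2)) \<circ> s) \<longlonglongrightarrow> l"
      using bounded_imp_convergent_subsequence by blast
    have sm: "strict_mono (\<lambda>k. s k + 2)" using s by (simp add: strict_mono_def)
    have "l \<in> ?S" by (rule acc[OF sm]) (use ls in \<open>auto simp: o_def\<close>)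
    thus ?thesis by blast
  qed
  have conv: "(\<lambda>t. infdist (?z t) ?S) \<longlonglongrightarrow> 0"
  proof (rule ccontr)
    assume nc: "\<not> ?thesis"
    obtain e where e: "e > 0" and ee: "\<forall>N. \<exists>n\<ge>N. e \<le> infdist (?z n) ?S"
    proof -
      from nc obtain e where e0: "e > 0" and h: "\<not> (\<exists>N. \<forall>n\<ge>N. norm (infdist (?z n) ?S - 0) < e)"
        unfolding LIMSEQ_def dist_norm by blast
      have "\<forall>N. \<exists>n\<ge>N. e \<le> infdist (?z n) ?S"
      proof
        fix N
        from h obtain n where "n \<ge> N" "\<not> norm (infdist (?z n) ?S - 0) < e" by blast
        thus "\<exists>n\<ge>N. e \<le> infdist (?z n) ?S" using infdist_nonneg[of "?z n" ?S] by auto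
      qed
      thus ?thesis using that e0 by blast
    qed
    define T where "T = {t. 2 \<le> t \<and> e \<le> infdist (?z t) ?S}"
    have infT: "infinite T" unfolding infinite_nat_iff_unbounded_le
    proof
      fix m
      obtain n where "n \<ge> max m 2" "e \<le> infdist (?z n) ?S" using ee by blast
      thus "\<exists>n\<ge>m. n \<in> T" unfolding T_def by auto
    qed
    define r where "r = enumerate T"
    have r: "strict_mono r" unfolding r_def by (rule strict_mono_enumerate[OF infT])
    have rT: "r k \<in> T" for k unfolding r_def by (rule enumerate_in_set[OF infT])
    have r2: "\<forall>k. 2 \<le> r k" using rT by (simp add: T_def)
    obtain l s where s: "strict_mono s" and ls: "((\<lambda>k. ?z (r k)) \<circ> s) \<longlonglongrightarrow> l"
      using bounded_imp_convergent_subsequence[OF bnd[OF r2]] by blast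
    have ls': "(\<lambda>k. ?z (r (s k))) \<longlonglongrightarrow> l" using ls by (simp add: o_def)
    have rs: "strict_mono (\<lambda>k. r (s k))" using strict_mono_o[OF r s] by (simp add: o_def)
    have lS: "l \<in> ?S" by (rule acc[OF rs _ ls']) (use r2 in auto)
    have "eventually (\<lambda>k. dist (?z (r (s k))) l < e) sequentially" using tendstoD[OF ls' e] .
    then obtain k where k: "dist (?z (r (s k))) l < e" using eventually_sequentially by auto
    have "infdist (?z (r (s k))) ?S \<le> dist (?z (r (s k))) l" by (rule infdist_le[OF lS])
    moreover have "e \<le> infdist (?z (r (s k))) ?S" using rT[of "s k"] by (simp add: T_def)
    ultimately show False using k by linarith
  qed
  show ?thesis using ne conv by blast
qed


end
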